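(* The equations (F1) $\mathsf F=\neg\mathsf T$ and (F3) $\neg\neg x=x$ are derivable in equational logic from the set $\{\text{(F2)},\text{(F4)},\text{(F5)},\text{(F6)},\text{(F7)},\text{(F9)}\}$ (i.e. from $\mathrm{EqFSCL}^-\setminus\{\text{(F8)},\text{(F10)}\}$).
   Context: Let $A$ be a nonempty set of atoms. Terms are over the signature with constants $\mathsf T,\mathsf F$, atoms $a\in A$, unary $\neg$, binary $\land^\circ$ and $\lor^\circ$. The equations are: (F2) $x\lor^\circ y=\neg(\neg x\land^\circ\neg y)$; (F4) $\mathsf T\land^\circ x=x$; (F5) $x\lor^\circ\mathsf F=x$; (F6) $\mathsf F\land^\circ x=\mathsf F$; (F7) $(x\land^\circ y)\land^\circ z=x\land^\circ(y\land^\circ z)$; (F8) $\neg x\land^\circ\mathsf F=x\land^\circ\mathsf F$; (F9) $(x\land^\circ\mathsf F)\lor^\circ y=(x\lor^\circ\mathsf T)\land^\circ y$; (F10) $(x\land^\circ y)\lor^\circ(z\land^\circ\mathsf F)=(x\lor^\circ(z\land^\circ\mathsf F))\land^\circ(y\lor^\circ(z\land^\circ\mathsf F))$. $\mathrm{EqFSCL}^-$ is the set $\{\text{(F2)},\text{(F4)},\ldots,\text{(F10)}\}$. *)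

theory Defs
  imports Main
begin

datatype 'a fterm =
    TT
  | FF
  | Atom 'a
  | Var nat
  | Neg "'a fterm"
  | LAnd "'a fterm" "'a fterm"
  | LOr "'a fterm" "'a fterm"

primrec subst :: "(nat \<Rightarrow> 'a fterm) \<Rightarrow> 'a fterm \<Rightarrow> 'a fterm" where
  "subst \<sigma> TT = TT"
| "subst \<sigma> FF = FF"
| "subst \<sigma> (Atom a) = Atom a"
| "subst \<sigma> (Var n) = \<sigma> n"
| "subst \<sigma> (Neg t) = Neg (subst \<sigma> t)"
| "subst \<sigma> (LAnd t u) = LAnd (subst \<sigma> t) (subst \<sigma> u)"
| "subst \<sigma> (LOr t u) = LOr (subst \<sigma> t) (subst \<sigma> u)"

inductive derivable :: "('a fterm \<times> 'a fterm) set \<Rightarrow> 'a fterm \<Rightarrow> 'a fterm \<Rightarrow> bool"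
  for E where
  ax: "(l, r) \<in> E \<Longrightarrow> derivable E (subst \<sigma> l) (subst \<sigma> r)"
| refl: "derivable E t t"
| sym: "derivable E t u \<Longrightarrow> derivable E u t"
| trans: "derivable E t u \<Longrightarrow> derivable E u v \<Longrightarrow> derivable E t v"
| cong_neg: "derivable E t u \<Longrightarrow> derivable E (Neg t) (Neg u)"
| cong_and: "derivable E t1 u1 \<Longrightarrow> derivable E t2 u2 \<Longrightarrow> derivable E (LAnd t1 t2) (LAnd u1 u2)"
| cong_or: "derivable E t1 u1 \<Longrightarrow> derivable E t2 u2 \<Longrightarrow> derivable E (LOr t1 t2) (LOr u1 u2)"

abbreviation vx :: "'a fterm" where "vx \<equiv> Var 0"
abbreviation vy :: "'a fterm" where "vy \<equiv> Var 1"
abbreviation vz :: "'a fterm" where "vz \<equiv> Var 2"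

definition F2 :: "'a fterm \<times> 'a fterm" where
  "F2 = (LOr vx vy, Neg (LAnd (Neg vx) (Neg vy)))"
definition F4 :: "'a fterm \<times> 'a fterm" where
  "F4 = (LAnd TT vx, vx)"
definition F5 :: "'a fterm \<times> 'a fterm" where
  "F5 = (LOr vx FF, vx)"
definition F6 :: "'a fterm \<times> 'a fterm" where
  "F6 = (LAnd FF vx, FF)"
definition F7 :: "'a fterm \<times> 'a fterm" where
  "F7 = (LAnd (LAnd vx vy) vz, LAnd vx (LAnd vy vz))"
definition F8 :: "'a fterm \<times> 'a fterm" where
  "F8 = (LAnd (Neg vx) FF, LAnd vx FF)"
definition F9 :: "'a fterm \<times> 'a fterm" where
  "F9 = (LOr (LAnd vx FF) vy, LAnd (LOr vx TT) vy)"
definition F10 :: "'a fterm \<times> 'a fterm" where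
  "F10 = (LOr (LAnd vx vy) (LAnd vz FF),
          LAnd (LOr vx (LAnd vz FF)) (LOr vy (LAnd vz FF)))"

definition EqFSCL_minus :: "('a fterm \<times> 'a fterm) set" where
  "EqFSCL_minus = {F2, F4, F5, F6, F7, F8, F9, F10}"

end

theory Submission
  imports Defs
begin

abbreviation EE :: "('a fterm \<times> 'a fterm) set" where
  "EE \<equiv> EqFSCL_minus - {F8, F10}"

abbreviation D :: "'a fterm \<Rightarrow> 'a fterm \<Rightarrow> bool" where
  "D \<equiv> derivable EE"

lemma ax2: "D (LOr x y) (Neg (LAnd (Neg x) (Neg y)))"
proof -
  have "F2 \<in> (EE :: ('a fterm \<times> 'a fterm) set)"
    by (simp add: EqFSCL_minus_def F2_def F8_def F10_def)
  from derivable.ax[OF this[unfolded F2_def], of "\<lambda>n. if n = 0 then x else y"]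
  show ?thesis by simp
qed

lemma ax4: "D (LAnd TT x) x"
proof -
  have "F4 \<in> (EE :: ('a fterm \<times> 'a fterm) set)"
    by (simp add: EqFSCL_minus_def F4_def F8_def F10_def)
  from derivable.ax[OF this[unfolded F4_def], of "\<lambda>n. x"]
  show ?thesis by simp
qed

lemma ax5: "D (LOr x FF) x"
proof -
  have "F5 \<in> (EE :: ('a fterm \<times> 'a fterm) set)"
    by (simp add: EqFSCL_minus_def F5_def F8_def F10_def)
  from derivable.ax[OF this[unfolded F5_def], of "\<lambda>n. x"]
  show ?thesis by simp
qed

lemma ax6: "D (LAnd FF x) FF"
proof -
  have "F6 \<in> (EE :: ('a fterm \<times> 'a fterm) set)"
    by (simp add: EqFSCL_minus_def F6_def F8_def F10_def)
  from derivable.ax[OF this[unfolded F6_def], of "\<lambda>n. x"]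
  show ?thesis by simp
qed

lemma ax7: "D (LAnd (LAnd x y) z) (LAnd x (LAnd y z))"
proof -
  have "F7 \<in> (EE :: ('a fterm \<times> 'a fterm) set)"
    by (simp add: EqFSCL_minus_def F7_def F8_def F10_def)
  from derivable.ax[OF this[unfolded F7_def],
      of "\<lambda>n. if n = 0 then x else if n = 1 then y else z"]
  show ?thesis by simp
qed

lemmas tr = derivable.trans
lemmas sy = derivable.sym
lemmas rf = derivable.refl

lemma L7: "D (Neg (LAnd (Neg x) (Neg FF))) x"
  by (meson ax2 ax5 sy tr)

lemma L9: "D (Neg (LAnd x (Neg FF))) (LAnd (Neg x) (Neg FF))"
proof -
  have "D (Neg (LAnd (Neg (LAnd (Neg x) (Neg FF))) (Neg FF))) (LAnd (Neg x) (Neg FF))"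
    by (rule L7)
  moreover have "D (Neg (LAnd (Neg (LAnd (Neg x) (Neg FF))) (Neg FF))) (Neg (LAnd x (Neg FF)))"
    by (intro derivable.cong_neg derivable.cong_and L7 rf)
  ultimately show ?thesis by (meson sy tr)
qed

lemma L11: "D (LAnd (Neg FF) (Neg FF)) (Neg FF)"
proof -
  have "D (Neg (LAnd FF (Neg FF))) (Neg FF)"
    by (intro derivable.cong_neg ax6)
  thus ?thesis using L9[of FF] by (meson sy tr)
qed

lemma L12: "D (LAnd (Neg (Neg x)) (Neg FF)) x"
  using L9[of "Neg x"] L7[of x] by (meson sy tr)

lemma L14: "D (Neg (Neg FF)) FF"
proof -
  have "D (Neg (LAnd (Neg FF) (Neg FF))) (Neg (Neg FF))"
    by (intro derivable.cong_neg L11)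
  thus ?thesis using L9[of "Neg FF"] L12[of FF] by (meson sy tr)
qed

lemma L15: "D (LAnd (Neg TT) (Neg FF)) FF"
proof -
  have "D (Neg (LAnd TT (Neg FF))) (Neg (Neg FF))"
    by (intro derivable.cong_neg ax4)
  thus ?thesis using L9[of TT] L14 by (meson sy tr)
qed

lemma L16: "D (Neg FF) TT"
proof -
  have "D (Neg (LAnd (Neg TT) (Neg FF))) (Neg FF)"
    by (intro derivable.cong_neg L15)
  thus ?thesis using L9[of "Neg TT"] L12[of TT] by (meson sy tr)
qed

lemma F1: "D FF (Neg TT)"
proof -
  have "D (Neg (Neg FF)) (Neg TT)"
    by (intro derivable.cong_neg L16)
  thus ?thesis using L14 by (meson sy tr)
qed

lemma L18: "D (LAnd (Neg (Neg x)) TT) x"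
proof -
  have "D (LAnd (Neg (Neg x)) (Neg FF)) (LAnd (Neg (Neg x)) TT)"
    by (intro derivable.cong_and L16 rf)
  thus ?thesis using L12[of x] by (meson sy tr)
qed

lemma L19: "D (LAnd (Neg (Neg x)) y) (LAnd x y)"
proof -
  have "D (LAnd (LAnd (Neg (Neg x)) TT) y) (LAnd x y)"
    by (intro derivable.cong_and L18 rf)
  moreover have "D (LAnd (Neg (Neg x)) (LAnd TT y)) (LAnd (Neg (Neg x)) y)"
    by (intro derivable.cong_and ax4 rf)
  ultimately show ?thesis using ax7[of "Neg (Neg x)" TT y] by (meson sy tr)
qed

lemma L21: "D (LAnd x TT) x"
  using L19[of x TT] L18[of x] by (meson sy tr)

lemma L23: "D (Neg (Neg x)) x"
  using L21[of "Neg (Neg x)"] L19[of x TT] L21[of x] by (meson sy tr)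

theorem proposition2p7:
  "derivable (EqFSCL_minus - {F8, F10}) FF (Neg TT)
   \<and> derivable (EqFSCL_minus - {F8, F10}) (Neg (Neg (Var 0))) (Var 0)"
  using F1 L23 by blast

end
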